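(* Let $T \subseteq \mathbb{Z}_2^\omega$ be a thin set. Then there exists a maximal (with respect to inclusion) thin set $T_0 \subseteq \mathbb{Z}_2^\omega$ such that $T \subseteq T_0$. Moreover, for every equivalence class $Q$ of the relation $\sim$ on $\mathbb{Z}_2^\omega$, the set $T_0 \cap Q$ is a maximal thin subset of $Q$.
   Context: $\mathbb{Z}_2^\omega$ is the set of all infinite binary sequences indexed by $\omega=\{0,1,2,\dots\}$. The Hamming distance is $\mathrm{hd}(x,y)=|\{k : x(k)\neq y(k)\}|\in\omega\cup\{\omega\}$, and $x\sim y$ iff $\mathrm{hd}(x,y)$ is finite. A set $T\subseteq \mathbb{Z}_2^\omega$ is thin if for every $n\in\omega$ the restriction to $T$ of the projection $x\mapsto x|_{\omega\setminus\{n\}}$ is injective (equivalently, no two distinct elements of $T$ differ in exactly one coordinate). *)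

theory Defs
  imports Main
begin

text \<open>Elements of Z_2^omega are modelled as functions nat => bool.\<close>

definition hamming_equiv :: "(nat \<Rightarrow> bool) \<Rightarrow> (nat \<Rightarrow> bool) \<Rightarrow> bool" where
  "hamming_equiv x y \<longleftrightarrow> finite {k. x k \<noteq> y k}"

text \<open>Projection x |-> x restricted to omega minus {n}.\<close>
definition proj_away :: "nat \<Rightarrow> (nat \<Rightarrow> bool) \<Rightarrow> (nat \<Rightarrow> bool option)" where
  "proj_away n x = (\<lambda>k. if k = n then None else Some (x k))"

definition thin :: "(nat \<Rightarrow> bool) set \<Rightarrow> bool" where
  "thin T \<longleftrightarrow> (\<forall>n. inj_on (proj_away n) T)"

definition maximal_thin_in :: "(nat \<Rightarrow> bool) set \<Rightarrow> (nat \<Rightarrow> bool) set \<Rightarrow> bool" where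
  "maximal_thin_in S A \<longleftrightarrow> S \<subseteq> A \<and> thin S \<and>
     (\<forall>S'. S \<subseteq> S' \<and> S' \<subseteq> A \<and> thin S' \<longrightarrow> S' = S)"

definition hamming_classes :: "(nat \<Rightarrow> bool) set set" where
  "hamming_classes = {{y. hamming_equiv x y} | x. True}"

end

theory Submission
  imports Defs
begin

lemma thin_iff:
  "thin S \<longleftrightarrow> (\<forall>x\<in>S. \<forall>y\<in>S. \<forall>n. (\<forall>k. k \<noteq> n \<longrightarrow> x k = y k) \<longrightarrow> x = y)"
proof -
  have e: "proj_away n x = proj_away n y \<longleftrightarrow> (\<forall>k. k \<noteq> n \<longrightarrow> x k = y k)" for n x y
    unfolding proj_away_def by (auto simp: fun_eq_iff split: if_splits)
  show ?thesis unfolding thin_def inj_on_def e by blast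
qed

lemma one_diff_equiv:
  assumes "\<forall>k. k \<noteq> n \<longrightarrow> x k = y k"
  shows "hamming_equiv x y"
proof -
  have "{k. x k \<noteq> y k} \<subseteq> {n}" using assms by auto
  then show ?thesis unfolding hamming_equiv_def using finite_subset by blast
qed

lemma thinD: "thin S \<Longrightarrow> x \<in> S \<Longrightarrow> y \<in> S \<Longrightarrow> \<forall>k. k \<noteq> n \<longrightarrow> x k = y k \<Longrightarrow> x = y"
proof -
  assume a: "thin S" "x \<in> S" "y \<in> S" "\<forall>k. k \<noteq> n \<longrightarrow> x k = y k"
  have "\<forall>x\<in>S. \<forall>y\<in>S. \<forall>n. (\<forall>k. k \<noteq> n \<longrightarrow> x k = y k) \<longrightarrow> x = y"
    using a(1) thin_iff by simp
  then show "x = y" using a(2,3,4) by blast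
qed

lemma heq_sym: "hamming_equiv x y \<Longrightarrow> hamming_equiv y x"
proof -
  assume a: "hamming_equiv x y"
  have "{k. y k \<noteq> x k} = {k. x k \<noteq> y k}" by auto
  then show ?thesis using a unfolding hamming_equiv_def by simp
qed

lemma heq_trans: "hamming_equiv x y \<Longrightarrow> hamming_equiv y z \<Longrightarrow> hamming_equiv x z"
proof -
  assume a: "hamming_equiv x y" "hamming_equiv y z"
  have "{k. x k \<noteq> z k} \<subseteq> {k. x k \<noteq> y k} \<union> {k. y k \<noteq> z k}" by auto
  then show ?thesis using a unfolding hamming_equiv_def using finite_subset by (metis finite_UnI)
qed

theorem proposition3:
  fixes T :: "(nat \<Rightarrow> bool) set"
  assumes "thin T"
  shows "\<exists>T0. maximal_thin_in T0 UNIV \<and> T \<subseteq> T0 \<and>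
           (\<forall>Q \<in> hamming_classes. maximal_thin_in (T0 \<inter> Q) Q)"
proof -
  let ?A = "{S. T \<subseteq> S \<and> thin S}"
  have "\<exists>M\<in>?A. \<forall>X\<in>?A. M \<subseteq> X \<longrightarrow> X = M"
  proof (rule subset_Zorn_nonempty)
    show "?A \<noteq> {}" using assms by auto
  next
    fix C assume ne: "C \<noteq> {}" and ch: "subset.chain ?A C"
    have sub: "C \<subseteq> ?A" and cmp: "\<forall>X\<in>C. \<forall>Y\<in>C. X \<subseteq> Y \<or> Y \<subseteq> X"
      using ch by (auto simp: subset_chain_def)
    have "thin (\<Union>C)" unfolding thin_iff
    proof (intro ballI allI impI)
      fix x y n assume x: "x \<in> \<Union>C" and y: "y \<in> \<Union>C" and d: "\<forall>k. k \<noteq> n \<longrightarrow> x k = y k"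
      obtain X Y where X: "X \<in> C" "x \<in> X" and Y: "Y \<in> C" "y \<in> Y" using x y by auto
      obtain Z where Z: "Z \<in> C" "x \<in> Z" "y \<in> Z" using cmp X Y by blast
      then have "thin Z" using sub by auto
      then show "x = y" using Z d thinD by metis
    qed
    moreover have "T \<subseteq> \<Union>C" using ne sub by auto
    ultimately show "\<Union>C \<in> ?A" by auto
  qed
  then obtain M where M0: "M \<in> ?A" and mx0: "\<forall>X\<in>?A. M \<subseteq> X \<longrightarrow> X = M"
    by blast
  have M: "T \<subseteq> M" "thin M" using M0 by simp_all
  have mx: "X = M" if "T \<subseteq> X" "thin X" "M \<subseteq> X" for X
    using mx0 that by simp
  have "maximal_thin_in M UNIV" unfolding maximal_thin_in_def using M mx by auto
  moreover have "maximal_thin_in (M \<inter> Q) Q" if Q: "Q \<in> hamming_classes" for Q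
  proof -
    obtain z where Qz: "Q = {y. hamming_equiv z y}" using Q unfolding hamming_classes_def by auto
    have tq: "thin (M \<inter> Q)" using M(2) unfolding thin_iff by simp
    have "S' = M \<inter> Q" if S: "M \<inter> Q \<subseteq> S'" "S' \<subseteq> Q" "thin S'" for S'
    proof -
      let ?U = "(M - Q) \<union> S'"
      have "thin ?U" unfolding thin_iff
      proof (intro ballI allI impI)
        fix x y n assume x: "x \<in> ?U" and y: "y \<in> ?U" and d: "\<forall>k. k \<noteq> n \<longrightarrow> x k = y k"
        have eq: "hamming_equiv x y" using one_diff_equiv[OF d] .
        have d': "\<forall>k. k \<noteq> n \<longrightarrow> y k = x k" using d by auto
        show "x = y"
        proof (cases "x \<in> S'")
          case True
          show ?thesis
          proof (cases "y \<in> S'")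
            case True
            with \<open>x \<in> S'\<close> S(3) d show ?thesis using thinD by metis
          next
            case False
            then have "y \<notin> Q" using y by auto
            moreover have "x \<in> Q" using True S(2) by auto
            ultimately show ?thesis using heq_trans[OF _ eq, of z] Qz by simp
          qed
        next
          case False
          then have xM: "x \<in> M" "x \<notin> Q" using x by auto
          show ?thesis
          proof (cases "y \<in> S'")
            case True
            then have "y \<in> Q" using S(2) by auto
            then show ?thesis using xM heq_trans[OF _ heq_sym[OF eq], of z] Qz by simp
          next
            case False
            then have "y \<in> M" using y by auto
            then show ?thesis using xM M(2) d thinD by metis
          qed
        qed
      qed
      moreover have "M \<subseteq> ?U" using S(1) by auto
      moreover have "T \<subseteq> ?U" using M(1) \<open>M \<subseteq> ?U\<close> by blast
      ultimately have "?U = M" using mx by simp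
      then have "S' \<subseteq> M" by blast
      then show ?thesis using S(1,2) by blast
    qed
    then show ?thesis unfolding maximal_thin_in_def using tq by blast
  qed
  ultimately show ?thesis using M(1) by blast
qed

end
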